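(* Let $\tau>1$, let $\kappa\ge3$ be an integer and let $x^\dagger\in\mathcal X$ satisfy $\bar k^\delta_{\mathrm{pr}}(x^\dagger)\ge\kappa$. Then on the event $\Omega_\kappa$ one has $k^\delta_{\mathrm{pr}}(x^\dagger)-1\ge\kappa/3$.
   Context: Setting: $K:\mathcal X\to\mathcal Y$ compact injective with dense range between infinite-dimensional real separable Hilbert spaces, singular system $(\sigma_j,v_j,u_j)$ ($(v_j),(u_j)$ orthonormal bases, $\sigma_1\ge\sigma_2\ge\dots>0$, $Kv_j=\sigma_ju_j$, $K^*u_j=\sigma_jv_j$); $y^\dagger=Kx^\dagger$, $\delta>0$, data $(y^\delta,u_j):=(y^\dagger,u_j)+\delta(Z,u_j)$ with real random variables $(Z,u_j)$. With $\min\emptyset=\infty$: $k^\delta_{\mathrm{pr}}(x^\dagger):=\min\{k\in\mathbb N_0:\sum_{j=1}^k(y^\delta-y^\dagger,u_j)^2\ge\sum_{j=k+1}^\infty(y^\dagger,u_j)^2\}$, $\bar k^\delta_{\mathrm{pr}}(x^\dagger):=\min\{k\in\mathbb N_0:\delta^2k\ge\sum_{j=k+1}^\infty(y^\dagger,u_j)^2\}$. With $\varepsilon_\tau:=\min\big(\frac{(\tau+1)^2}{4}-1,\frac13\big)$, define the event $$\Omega_\kappa:=\Big\{\Big|\sum_{j=1}^m(y^\delta-y^\dagger,u_j)^2-m\delta^2\Big|\le\varepsilon_\tau m\delta^2\ \text{for all integers } m\ge\kappa/3\Big\}.$$ *)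

theory Defs
  imports "HOL-Analysis.Analysis" "HOL-Library.Extended_Nat"
begin

definition compact_operator :: "('a::real_normed_vector \<Rightarrow> 'b::real_normed_vector) \<Rightarrow> bool" where
  "compact_operator K \<longleftrightarrow> bounded_linear K \<and> compact (closure (K ` cball 0 1))"

definition orthonormal_basis1 :: "(nat \<Rightarrow> 'a::{real_inner,complete_space}) \<Rightarrow> bool" where
  "orthonormal_basis1 u \<longleftrightarrow>
     (\<forall>i\<ge>1. \<forall>j\<ge>1. inner (u i) (u j) = (if i = j then 1 else 0)) \<and>
     closure (span (u ` {1..})) = UNIV"

definition singular_system ::
  "('x::{real_inner,complete_space} \<Rightarrow> 'y::{real_inner,complete_space}) \<Rightarrow> ('y \<Rightarrow> 'x)
   \<Rightarrow> (nat \<Rightarrow> real) \<Rightarrow> (nat \<Rightarrow> 'x) \<Rightarrow> (nat \<Rightarrow> 'y) \<Rightarrow> bool" where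
  "singular_system K Kstar \<sigma> v u \<longleftrightarrow>
     (\<forall>x y. inner (K x) y = inner x (Kstar y)) \<and>
     orthonormal_basis1 v \<and> orthonormal_basis1 u \<and>
     (\<forall>j\<ge>1. \<sigma> j > 0 \<and> \<sigma> (Suc j) \<le> \<sigma> j) \<and>
     (\<forall>j\<ge>1. K (v j) = \<sigma> j *\<^sub>R u j \<and> Kstar (u j) = \<sigma> j *\<^sub>R v j)"

text \<open>Tail sum  \<Sum>_{j=k+1}^\<infinity> c_j^2  of coefficients c_j = (y\<dagger>,u_j).\<close>
definition tail_sq :: "(nat \<Rightarrow> real) \<Rightarrow> nat \<Rightarrow> real" where
  "tail_sq c k = (\<Sum>i. (c (i + k + 1))\<^sup>2)"

definition min_enat :: "nat set \<Rightarrow> enat" where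
  "min_enat S = (if S = {} then \<infinity> else enat (LEAST k. k \<in> S))"

text \<open>k_pr: e_j = (y^\<delta> - y\<dagger>, u_j), c_j = (y\<dagger>, u_j).\<close>
definition k_pr :: "(nat \<Rightarrow> real) \<Rightarrow> (nat \<Rightarrow> real) \<Rightarrow> enat" where
  "k_pr e c = min_enat {k. (\<Sum>j=1..k. (e j)\<^sup>2) \<ge> tail_sq c k}"

definition k_pr_bar :: "real \<Rightarrow> (nat \<Rightarrow> real) \<Rightarrow> enat" where
  "k_pr_bar \<delta> c = min_enat {k. \<delta>\<^sup>2 * real k \<ge> tail_sq c k}"

definition eps_tau :: "real \<Rightarrow> real" where
  "eps_tau \<tau> = min ((\<tau> + 1)\<^sup>2 / 4 - 1) (1/3)"

text \<open>The event Omega_kappa, evaluated at a realisation with noise coefficients e.\<close>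
definition Omega_event :: "real \<Rightarrow> real \<Rightarrow> nat \<Rightarrow> (nat \<Rightarrow> real) \<Rightarrow> bool" where
  "Omega_event \<tau> \<delta> \<kappa> e \<longleftrightarrow>
     (\<forall>m::nat. real m \<ge> real \<kappa> / 3 \<longrightarrow>
        \<bar>(\<Sum>j=1..m. (e j)\<^sup>2) - real m * \<delta>\<^sup>2\<bar> \<le> eps_tau \<tau> * real m * \<delta>\<^sup>2)"

end

theory Submission
  imports Defs
begin

lemma tail_mono:
  fixes f :: "nat \<Rightarrow> real"
  assumes nn: "\<And>i. f i \<ge> 0" and s: "summable (\<lambda>i. f (i + n + 1))" and kn: "k \<le> n"
  shows "suminf (\<lambda>i. f (i + k + 1)) \<ge> suminf (\<lambda>i. f (i + n + 1))"
proof -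
  define g where "g i = f (i + k + 1)" for i
  have eq: "(\<lambda>i. g (i + (n - k))) = (\<lambda>i. f (i + n + 1))"
    using kn by (auto simp: g_def)
  have sg: "summable g" using s summable_iff_shift[of g "n-k"] eq by simp
  have "suminf g = suminf (\<lambda>i. g (i + (n - k))) + sum g {..<n-k}"
    using suminf_split_initial_segment[OF sg] by simp
  moreover have "sum g {..<n-k} \<ge> 0" using nn by (auto simp: g_def intro: sum_nonneg)
  ultimately have "suminf g \<ge> suminf (\<lambda>i. g (i + (n - k)))" by linarith
  thus ?thesis using eq unfolding g_def by simp
qed

theorem mainTheorem10:
  fixes K :: "'x::{real_inner,complete_space} \<Rightarrow> 'y::{real_inner,complete_space}"
    and Kstar :: "'y \<Rightarrow> 'x"
    and \<sigma> :: "nat \<Rightarrow> real" and v :: "nat \<Rightarrow> 'x" and u :: "nat \<Rightarrow> 'y"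
    and xdag :: 'x and \<delta> \<tau> :: real and \<kappa> :: nat
    and z :: "nat \<Rightarrow> real"   \<comment> \<open>a realisation of the noise coefficients (Z,u_j)\<close>
    and yd :: "nat \<Rightarrow> real"  \<comment> \<open>data coefficients (y^\<delta>,u_j)\<close>
  assumes "compact_operator K" and "inj K" and "closure (range K) = UNIV"
    and "singular_system K Kstar \<sigma> v u"
    and "\<delta> > 0"
    and "\<And>j. yd j = inner (K xdag) (u j) + \<delta> * z j"
    and "\<tau> > 1" and "\<kappa> \<ge> 3"
    and "k_pr_bar \<delta> (\<lambda>j. inner (K xdag) (u j)) \<ge> enat \<kappa>"
    and "Omega_event \<tau> \<delta> \<kappa> (\<lambda>j. yd j - inner (K xdag) (u j))"
  shows "k_pr (\<lambda>j. yd j - inner (K xdag) (u j)) (\<lambda>j. inner (K xdag) (u j)) = \<infinity> \<or>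
         (\<exists>k. k_pr (\<lambda>j. yd j - inner (K xdag) (u j)) (\<lambda>j. inner (K xdag) (u j)) = enat k
              \<and> real k - 1 \<ge> real \<kappa> / 3)"
proof -
  define e where "e j = yd j - inner (K xdag) (u j)" for j
  define c where "c j = inner (K xdag) (u j)" for j
  define S where "S m = (\<Sum>j=1..m. (e j)\<^sup>2)" for m
  have kb: "k_pr_bar \<delta> c \<ge> enat \<kappa>" using assms(9) unfolding c_def by simp
  have om: "Omega_event \<tau> \<delta> \<kappa> e" using assms(10) unfolding e_def by simp
  have notin: "\<not> (\<delta>\<^sup>2 * real (\<kappa>-1) \<ge> tail_sq c (\<kappa>-1))"
  proof
    assume h: "\<delta>\<^sup>2 * real (\<kappa>-1) \<ge> tail_sq c (\<kappa>-1)"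
    let ?A = "{k. \<delta>\<^sup>2 * real k \<ge> tail_sq c k}"
    have "?A \<noteq> {}" using h by blast
    hence "k_pr_bar \<delta> c = enat (LEAST k. k \<in> ?A)" by (simp add: k_pr_bar_def min_enat_def)
    moreover have "(LEAST k. k \<in> ?A) \<le> \<kappa> - 1" using h by (intro Least_le) simp
    ultimately show False using kb assms(8) by simp
  qed
  hence Tbig: "tail_sq c (\<kappa>-1) > \<delta>\<^sup>2 * real (\<kappa>-1)" by simp
  have Tmono: "tail_sq c k \<ge> tail_sq c (\<kappa>-1)" if kk: "k \<le> \<kappa>-1" for k
  proof (cases "summable (\<lambda>i. (c (i + (\<kappa>-1) + 1))\<^sup>2)")
    case True
    show ?thesis
      unfolding tail_sq_def using tail_mono[of "\<lambda>i. (c i)\<^sup>2", OF _ True kk] by simp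
  next
    case False
    define g where "g i = (c (i + k + 1))\<^sup>2" for i
    have eq: "(\<lambda>i. g (i + (\<kappa>-1 - k))) = (\<lambda>i. (c (i + (\<kappa>-1) + 1))\<^sup>2)"
    proof
      fix i show "g (i + (\<kappa>-1 - k)) = (c (i + (\<kappa>-1) + 1))\<^sup>2"
      proof -
        have "i + (\<kappa>-1 - k) + k + 1 = i + (\<kappa>-1) + 1" using kk by simp
        thus ?thesis unfolding g_def by (metis add.assoc)
      qed
    qed
    have ng: "\<not> summable g" using False summable_iff_shift[of g "\<kappa>-1-k"] eq by metis
    have p1: "(\<lambda>s. g sums s) = (\<lambda>_. False)" using ng by (auto simp: summable_def)
    have "tail_sq c k = suminf g" unfolding tail_sq_def g_def by simp
    also have "\<dots> = The (\<lambda>_. False)" unfolding suminf_def p1 ..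
    finally have "tail_sq c k = The (\<lambda>_. False)" .
    moreover
    have p2: "(\<lambda>s. (\<lambda>i. (c (i + (\<kappa>-1) + 1))\<^sup>2) sums s) = (\<lambda>_. False)"
      using False by (auto simp: summable_def)
    have "tail_sq c (\<kappa>-1) = The (\<lambda>_. False)" unfolding tail_sq_def suminf_def p2 ..
    ultimately show ?thesis by simp
  qed
  define m0 where "m0 = (\<kappa>+2) div 3"
  have m0a: "3*m0 \<ge> \<kappa>" "3*m0 \<le> \<kappa>+2" unfolding m0_def by auto
  have "real m0 \<ge> real \<kappa> / 3" using m0a by simp
  hence "\<bar>S m0 - real m0 * \<delta>\<^sup>2\<bar> \<le> eps_tau \<tau> * real m0 * \<delta>\<^sup>2"
    using om unfolding Omega_event_def S_def by blast
  moreover have "eps_tau \<tau> \<le> 1/3" unfolding eps_tau_def by (rule min.cobounded2)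
  ultimately have "S m0 \<le> real m0 * \<delta>\<^sup>2 + (1/3) * real m0 * \<delta>\<^sup>2"
    using mult_right_mono[of "eps_tau \<tau>" "1/3" "real m0 * \<delta>\<^sup>2"] by (auto simp: mult.assoc)
  moreover have "4 * m0 \<le> 3 * (\<kappa> - 1)" using m0a assms(8) by linarith
  hence "4 * real m0 \<le> 3 * real (\<kappa> - 1)" by (metis of_nat_le_iff of_nat_mult of_nat_numeral)
  ultimately have Sm0: "S m0 \<le> real (\<kappa> - 1) * \<delta>\<^sup>2"
    using mult_right_mono[of "4 * real m0" "3 * real (\<kappa> - 1)" "\<delta>\<^sup>2"] by (simp add: algebra_simps)
  show ?thesis
  proof (cases "k_pr e c")
    case infinity thus ?thesis by (simp add: e_def[abs_def] c_def[abs_def])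
  next
    case (enat k)
    let ?B = "{k. (\<Sum>j=1..k. (e j)\<^sup>2) \<ge> tail_sq c k}"
    have ne: "?B \<noteq> {}" using enat by (auto simp: k_pr_def min_enat_def split: if_splits)
    have "k_pr e c = enat (LEAST k. k \<in> ?B)" using ne unfolding k_pr_def min_enat_def by simp
    hence kl: "k = (LEAST k. k \<in> ?B)" using enat by simp
    have kin: "k \<in> ?B" unfolding kl using ne by (metis LeastI ex_in_conv)
    have "real k - 1 \<ge> real \<kappa> / 3"
    proof (rule ccontr)
      assume "\<not> ?thesis"
      hence "3*k < \<kappa> + 3" by linarith
      hence k1: "k \<le> m0" "k \<le> \<kappa> - 1" using m0a assms(8) by auto
      have "S k \<le> S m0" unfolding S_def using k1(1)
        by (intro sum_mono2) auto
      also have "\<dots> < tail_sq c (\<kappa>-1)" using Sm0 Tbig by (simp add: mult.commute)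
      also have "\<dots> \<le> tail_sq c k" using Tmono k1(2) by blast
      finally show False using kin by (simp add: S_def)
    qed
    thus ?thesis using enat by (simp add: e_def[abs_def] c_def[abs_def])
  qed
qed

end
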